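(* Let $q=1-p=o\!\left(\frac{1}{n^{1.5}}\right)$. Then for all sufficiently large $n\in\mathbb{N}$ we have $u_2(n,p)=u_2'(n,p)=3$.
   Context: $G(n,p)$ is the Erdős–Rényi random graph on $n$ labelled vertices (vertex set $V$), each edge present independently with probability $p=p(n)$; $\mathbb{P}_{n,p}$ is the corresponding probability and $q=1-p$. A diameter graph in $\mathbb{R}^d$ is a graph $(V,E)$ with $V\subset\mathbb{R}^d$ finite and $E=\{\{\mathbf{x},\mathbf{y}\}\subseteq V: |\mathbf{x}-\mathbf{y}|=\operatorname{diam}V\}$, where $\operatorname{diam}V=\max_{\mathbf{x},\mathbf{y}\in V}|\mathbf{x}-\mathbf{y}|$ (Euclidean norm); a graph is a diameter graph in $\mathbb{R}^d$ if it is isomorphic to one. $u_d(n,p)$ is the largest positive integer $k$ such that $\mathbb{P}_{n,p}\big(\exists W\subseteq V,\ |W|=k,\ G[W]$ is a diameter graph in $\mathbb{R}^d$ and $\chi(G[W])=d+1\big)>\frac12$, where $G[W]$ is the induced subgraph; if no such $k$ exists, $u_d(n,p)=0$. $u_d'(n,p)$ is defined identically with the additional requirement that $G[W]$ be connected. *)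

theory Defs
  imports Complex_Main "HOL-Library.Landau_Symbols"
begin

text \<open>Points of R^d are represented as functions nat => real, of which only the
  coordinates 0..d-1 are relevant.  Euclidean distance in R^d:\<close>
definition edist :: "nat \<Rightarrow> (nat \<Rightarrow> real) \<Rightarrow> (nat \<Rightarrow> real) \<Rightarrow> real" where
  "edist d x y = sqrt (\<Sum>i<d. (x i - y i)^2)"

text \<open>Graphs on vertex set W with edge set E (a set of 2-element subsets of W).
  (W,E) is a diameter graph in R^d iff it is isomorphic to one: there is an injective
  placement f of W into R^d such that the edges are exactly the pairs at distance diam.\<close>
definition is_diameter_graph :: "nat \<Rightarrow> 'v set \<Rightarrow> 'v set set \<Rightarrow> bool" where
  "is_diameter_graph d W E \<longleftrightarrow>
     (\<exists>f :: 'v \<Rightarrow> (nat \<Rightarrow> real).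
        (\<forall>x\<in>W. \<forall>y\<in>W. x \<noteq> y \<longrightarrow> edist d (f x) (f y) > 0) \<and>
        (let D = Max {edist d (f x) (f y) | x y. x \<in> W \<and> y \<in> W} in
         \<forall>e. e \<in> E \<longleftrightarrow> (\<exists>x\<in>W. \<exists>y\<in>W. x \<noteq> y \<and> e = {x, y} \<and> edist d (f x) (f y) = D)))"

definition chromatic_number :: "'v set \<Rightarrow> 'v set set \<Rightarrow> nat" where
  "chromatic_number W E =
     (LEAST k. \<exists>c :: 'v \<Rightarrow> nat. (\<forall>x\<in>W. c x < k) \<and>
                 (\<forall>x\<in>W. \<forall>y\<in>W. x \<noteq> y \<longrightarrow> {x, y} \<in> E \<longrightarrow> c x \<noteq> c y))"

definition graph_connected :: "'v set \<Rightarrow> 'v set set \<Rightarrow> bool" where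
  "graph_connected W E \<longleftrightarrow>
     (\<forall>x\<in>W. \<forall>y\<in>W. (\<lambda>a b. a \<in> W \<and> b \<in> W \<and> a \<noteq> b \<and> {a, b} \<in> E)\<^sup>*\<^sup>* x y)"

definition induced_edges :: "'v set set \<Rightarrow> 'v set \<Rightarrow> 'v set set" where
  "induced_edges E W = {e \<in> E. e \<subseteq> W}"

definition all_edges :: "nat \<Rightarrow> nat set set" where
  "all_edges n = {{i, j} | i j. i < j \<and> j < n}"

definition prob_Gnp :: "nat \<Rightarrow> real \<Rightarrow> (nat set set \<Rightarrow> bool) \<Rightarrow> real" where
  "prob_Gnp n p P =
     (\<Sum>E\<in>Pow (all_edges n).
        if P E then p ^ card E * (1 - p) ^ (card (all_edges n) - card E) else 0)"

definition u_good :: "bool \<Rightarrow> nat \<Rightarrow> nat \<Rightarrow> real \<Rightarrow> nat \<Rightarrow> bool" where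
  "u_good conn d n p k \<longleftrightarrow>
     prob_Gnp n p (\<lambda>E. \<exists>W. W \<subseteq> {..<n} \<and> card W = k \<and>
        is_diameter_graph d W (induced_edges E W) \<and>
        chromatic_number W (induced_edges E W) = d + 1 \<and>
        (conn \<longrightarrow> graph_connected W (induced_edges E W))) > 1/2"

text \<open>u_d(n,p) (conn = False) and u'_d(n,p) (conn = True): the largest positive k
  with the property, or 0 if there is none.\<close>
definition u :: "nat \<Rightarrow> nat \<Rightarrow> real \<Rightarrow> nat" where
  "u d n p = (if \<exists>k>0. u_good False d n p k then GREATEST k. k > 0 \<and> u_good False d n p k else 0)"

definition u' :: "nat \<Rightarrow> nat \<Rightarrow> real \<Rightarrow> nat" where
  "u' d n p = (if \<exists>k>0. u_good True d n p k then GREATEST k. k > 0 \<and> u_good True d n p k else 0)"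

end

theory Submission
  imports Defs
begin

lemma sum_pow_subsets:
  fixes p q :: real
  assumes "finite T"
  shows "(\<Sum>E\<in>Pow T. p^card E * q^(card T - card E)) = (p+q)^card T"
  using assms
proof (induction T rule: finite_induct)
  case empty then show ?case by simp
next
  case (insert a T)
  have disj: "Pow T \<inter> insert a ` Pow T = {}" using insert.hyps by auto
  have inj: "inj_on (insert a) (Pow T)" using insert.hyps unfolding inj_on_def by (metis PowD insert_ident subset_iff)
  have fin: "finite (Pow T)" using insert.hyps by simp
  have cT: "card (insert a T) = Suc (card T)" using insert.hyps by simp
  have s1: "(\<Sum>E\<in>Pow T. p^card E * q^(card (insert a T) - card E)) = q * (\<Sum>E\<in>Pow T. p^card E * q^(card T - card E))"
    unfolding sum_distrib_left
  proof (rule sum.cong[OF refl])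
    fix E assume "E \<in> Pow T"
    then have "card E \<le> card T" using insert.hyps by (simp add: card_mono)
    then have "card (insert a T) - card E = Suc (card T - card E)" using cT by simp
    then show "p^card E * q^(card (insert a T) - card E) = q * (p^card E * q^(card T - card E))" by simp
  qed
  have s2: "(\<Sum>E\<in>insert a ` Pow T. p^card E * q^(card (insert a T) - card E)) = p * (\<Sum>E\<in>Pow T. p^card E * q^(card T - card E))"
    unfolding sum.reindex[OF inj] sum_distrib_left
  proof (rule sum.cong[OF refl])
    fix E assume E: "E \<in> Pow T"
    then have "a \<notin> E" "finite E" using insert.hyps finite_subset by auto
    then have "card (insert a E) = Suc (card E)" by simp
    then show "((\<lambda>E. p^card E * q^(card (insert a T) - card E)) \<circ> insert a) E = p * (p^card E * q^(card T - card E))" using cT by simp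
  qed
  have "(\<Sum>E\<in>Pow (insert a T). p^card E * q^(card (insert a T) - card E))
     = (\<Sum>E\<in>Pow T. p^card E * q^(card (insert a T) - card E)) + (\<Sum>E\<in>insert a ` Pow T. p^card E * q^(card (insert a T) - card E))"
    unfolding Pow_insert by (rule sum.union_disjoint) (use fin disj in auto)
  also have "... = (p+q) * (p+q)^card T" using s1 s2 insert.IH by (simp add: algebra_simps)
  finally show ?case using cT by simp
qed

definition wgt :: "nat \<Rightarrow> real \<Rightarrow> nat set set \<Rightarrow> real" where
  "wgt n p E = p ^ card E * (1 - p) ^ (card (all_edges n) - card E)"

lemma fin_all_edges: "finite (all_edges n)"
proof -
  have "all_edges n \<subseteq> Pow {..<n}" unfolding all_edges_def by auto
  then show ?thesis by (rule finite_subset) simp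
qed

lemma edge_in: "a < n \<Longrightarrow> b < n \<Longrightarrow> a \<noteq> b \<Longrightarrow> {a,b} \<in> all_edges n"
  unfolding all_edges_def
  by (cases "a < b") (auto, metis insert_commute linorder_neqE_nat)

lemma prob_alt: "prob_Gnp n p P = (\<Sum>E\<in>Pow (all_edges n). if P E then wgt n p E else 0)"
  unfolding prob_Gnp_def wgt_def by simp

lemma wgt_nonneg: "0 \<le> p \<Longrightarrow> p \<le> 1 \<Longrightarrow> 0 \<le> wgt n p E"
  unfolding wgt_def by simp

lemma prob_mono:
  assumes "0 \<le> p" "p \<le> 1" "\<And>E. E \<subseteq> all_edges n \<Longrightarrow> P E \<Longrightarrow> Q E"
  shows "prob_Gnp n p P \<le> prob_Gnp n p Q"
  unfolding prob_alt by (rule sum_mono) (use assms wgt_nonneg in auto)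

lemma prob_union:
  assumes "0 \<le> p" "p \<le> 1" "finite I" "\<And>E. E \<subseteq> all_edges n \<Longrightarrow> P E \<Longrightarrow> \<exists>i\<in>I. Q i E"
  shows "prob_Gnp n p P \<le> (\<Sum>i\<in>I. prob_Gnp n p (Q i))"
proof -
  have "prob_Gnp n p P \<le> (\<Sum>E\<in>Pow (all_edges n). \<Sum>i\<in>I. if Q i E then wgt n p E else 0)"
    unfolding prob_alt
  proof (rule sum_mono)
    fix E assume E: "E \<in> Pow (all_edges n)"
    show "(if P E then wgt n p E else 0) \<le> (\<Sum>i\<in>I. if Q i E then wgt n p E else 0)"
    proof (cases "P E")
      case True
      then obtain i where i: "i \<in> I" "Q i E" using assms(4) E by auto
      have "(if Q i E then wgt n p E else 0) \<le> (\<Sum>i\<in>I. if Q i E then wgt n p E else 0)"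
        by (rule member_le_sum) (use i assms wgt_nonneg in auto)
      then show ?thesis using True i by simp
    next
      case False
      then show ?thesis by (simp add: sum_nonneg wgt_nonneg assms)
    qed
  qed
  also have "... = (\<Sum>i\<in>I. prob_Gnp n p (Q i))" unfolding prob_alt by (rule sum.swap)
  finally show ?thesis .
qed

lemma prob_compl:
  "prob_Gnp n p P + prob_Gnp n p (\<lambda>E. \<not> P E) = 1"
proof -
  have "prob_Gnp n p P + prob_Gnp n p (\<lambda>E. \<not> P E) = (\<Sum>E\<in>Pow (all_edges n). wgt n p E)"
    unfolding prob_alt sum.distrib[symmetric] by (rule sum.cong) auto
  also have "... = (p + (1-p))^card (all_edges n)" unfolding wgt_def
    by (rule sum_pow_subsets[OF fin_all_edges])
  finally show ?thesis by simp
qed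

lemma prob_avoid:
  assumes "F \<subseteq> all_edges n"
  shows "prob_Gnp n p (\<lambda>E. F \<inter> E = {}) = (1-p)^card F"
proof -
  let ?S = "all_edges n"
  have finS: "finite ?S" by (rule fin_all_edges)
  have finF: "finite F" using assms finS finite_subset by auto
  have cS: "card ?S = card F + card (?S - F)" using assms finF finS
    by (metis card_Diff_subset add_diff_inverse_nat card_mono not_less)
  have "prob_Gnp n p (\<lambda>E. F \<inter> E = {}) = (\<Sum>E\<in>Pow ?S. if F \<inter> E = {} then wgt n p E else 0)"
    by (rule prob_alt)
  also have "... = (\<Sum>E\<in>{E\<in>Pow ?S. F \<inter> E = {}}. wgt n p E)"
    using sum.inter_filter[of "Pow ?S" "wgt n p" "\<lambda>E. F \<inter> E = {}"] finS by simp
  also have "{E\<in>Pow ?S. F \<inter> E = {}} = Pow (?S - F)" by auto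
  also have "(\<Sum>E\<in>Pow (?S - F). wgt n p E) = (\<Sum>E\<in>Pow (?S - F). (1-p)^card F * (p^card E * (1-p)^(card (?S - F) - card E)))"
  proof (rule sum.cong[OF refl])
    fix E assume "E \<in> Pow (?S - F)"
    then have "card E \<le> card (?S - F)" using finS by (simp add: card_mono)
    then have "card ?S - card E = card F + (card (?S - F) - card E)" using cS by simp
    then show "wgt n p E = (1-p)^card F * (p^card E * (1-p)^(card (?S - F) - card E))"
      unfolding wgt_def by (simp add: power_add)
  qed
  also have "... = (1-p)^card F * (p + (1-p))^card (?S - F)"
    unfolding sum_distrib_left[symmetric] using finS by (simp add: sum_pow_subsets)
  finally show ?thesis by simp
qed

lemma pick: assumes "finite W" "card W \<ge> Suc k" obtains x where "x \<in> W" "card (W - {x}) \<ge> k"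
proof -
  from assms have "W \<noteq> {}" by auto
  then obtain x where "x \<in> W" by auto
  moreover have "card (W - {x}) = card W - 1" using \<open>x\<in>W\<close> assms(1) by simp
  ultimately show ?thesis using that assms by fastforce
qed

lemma comb:
  assumes fin: "finite W" and c4: "card W \<ge> 4"
  and sym: "\<And>x y. R x y \<Longrightarrow> R y x"
  and A: "\<And>x y z. x\<in>W \<Longrightarrow> y\<in>W \<Longrightarrow> z\<in>W \<Longrightarrow> x\<noteq>y \<Longrightarrow> x\<noteq>z \<Longrightarrow> y\<noteq>z \<Longrightarrow> R x y \<or> R x z"
  and G: "\<And>a b c d. a\<in>W \<Longrightarrow> b\<in>W \<Longrightarrow> c\<in>W \<Longrightarrow> d\<in>W \<Longrightarrow> a\<noteq>b \<Longrightarrow> a\<noteq>c \<Longrightarrow> a\<noteq>d \<Longrightarrow> b\<noteq>c \<Longrightarrow> b\<noteq>d \<Longrightarrow> c\<noteq>d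
      \<Longrightarrow> R a b \<Longrightarrow> R a c \<Longrightarrow> R b c \<Longrightarrow> R a d \<Longrightarrow> R b d \<Longrightarrow> False"
  shows "\<exists>c::'v\<Rightarrow>nat. (\<forall>x\<in>W. c x < 2) \<and> (\<forall>x\<in>W. \<forall>y\<in>W. x\<noteq>y \<longrightarrow> c x = c y \<longrightarrow> \<not> R x y)"
proof -
  have partner: "\<exists>y\<in>W. y \<noteq> x \<and> \<not> R x y" if x: "x \<in> W" for x
  proof (rule ccontr)
    assume na: "\<not> (\<exists>y\<in>W. y \<noteq> x \<and> \<not> R x y)"
    have c3: "card (W - {x}) \<ge> Suc 2" using x fin c4 by simp
    obtain y where y: "y \<in> W - {x}" "card (W - {x} - {y}) \<ge> Suc 1"
      by (rule pick[of "W - {x}" 2]) (use fin c3 in auto)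
    obtain z where z: "z \<in> W - {x} - {y}" "card (W - {x} - {y} - {z}) \<ge> Suc 0"
      by (rule pick[of "W - {x} - {y}" 1]) (use fin y in auto)
    obtain w where w: "w \<in> W - {x} - {y} - {z}"
      by (rule pick[of "W - {x} - {y} - {z}" 0]) (use fin z in auto)
    have rx: "R x y" "R x z" "R x w" using na y z w by auto
    show False
    proof (cases "R y z")
      case True
      show False
      proof (cases "R y w")
        case True
        then show False using G[of x y z w] x rx \<open>R y z\<close> y z w by auto
      next
        case False
        then have "\<not> R w y" using sym[of w y] by blast
        then have "R w z" using A[of w y z] y z w by auto
        then show False using G[of x z y w] x rx y z w sym[of y z] sym[of w z] \<open>R y z\<close> by auto
      qed
    next
      case False
      then have "R y w" using A[of y z w] y z w by auto
      have "\<not> R z y" using False sym[of z y] by blast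
      then have "R z w" using A[of z y w] y z w by auto
      then show False using G[of x w y z] x rx y z w sym[of y w] sym[of z w] \<open>R y w\<close> by auto
    qed
  qed
  obtain x where x: "x \<in> W" using c4 by fastforce
  obtain y where y: "y \<in> W" "y \<noteq> x" "\<not> R x y" using partner[OF x] by auto
  have c2: "card (W - {x} - {y}) \<ge> Suc 1" using x y fin c4 by simp
  obtain z where z0: "z \<in> W - {x} - {y}" "card (W - {x} - {y} - {z}) \<ge> 1"
    by (rule pick[of "W - {x} - {y}" 1]) (use fin c2 in auto)
  have z: "z \<in> W" "z \<noteq> x" "z \<noteq> y" using z0 by auto
  obtain w where w: "w \<in> W" "w \<noteq> z" "\<not> R z w" using partner[OF z(1)] by auto
  have nyx: "\<not> R y x" using y sym[of y x] by blast
  have nwz: "\<not> R w z" using w sym[of w z] by blast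
  have wx: "w \<noteq> x"
  proof
    assume "w = x"
    have "R x z" using A[of x y z] x y z by blast
    then show False using sym[of x z] w \<open>w = x\<close> by blast
  qed
  have wy: "w \<noteq> y"
  proof
    assume "w = y"
    have "R y z" using A[of y x z] x y z nyx by blast
    then show False using sym[of y z] w \<open>w = y\<close> by blast
  qed
  have Wsub: "W \<subseteq> {x,y,z,w}"
  proof
    fix t assume t: "t \<in> W"
    show "t \<in> {x,y,z,w}"
    proof (rule ccontr)
      assume "t \<notin> {x,y,z,w}"
      then have tn: "t \<noteq> x" "t \<noteq> y" "t \<noteq> z" "t \<noteq> w" by auto
      have 1: "R z t" using A[of z w t] t tn z w by auto
      have 2: "R z x" using A[of z w x] x z w wx by auto
      have "R x t" using A[of x y t] x y t tn by auto
      then have 3: "R t x" using sym by blast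
      have 4: "R z y" using A[of z w y] y z w wy by auto
      have "R y t" using A[of y x t] x y t tn nyx by auto
      then have 5: "R t y" using sym by blast
      show False using G[of z t x y] 1 2 3 4 5 x y z t tn by auto
    qed
  qed
  define c where "c = (\<lambda>v. if v = x \<or> v = y then 0 else (1::nat))"
  have "\<forall>a\<in>W. \<forall>b\<in>W. a\<noteq>b \<longrightarrow> c a = c b \<longrightarrow> \<not> R a b"
  proof (intro ballI impI)
    fix a b assume ab: "a \<in> W" "b \<in> W" "a \<noteq> b" "c a = c b"
    have "a \<in> {x,y,z,w}" "b \<in> {x,y,z,w}" using ab Wsub by auto
    then show "\<not> R a b" using ab nyx nwz y w wx wy z unfolding c_def by (auto split: if_splits)
  qed
  moreover have "\<forall>v\<in>W. c v < 2" unfolding c_def by auto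
  ultimately show ?thesis by blast
qed


lemma geo:
  fixes u1 u2 v1 v2 w1 w2 D :: real
  assumes "u1^2+u2^2=D^2" "v1^2+v2^2=D^2" "w1^2+w2^2=D^2"
   "(u1-v1)^2+(u2-v2)^2=D^2" "(u1-w1)^2+(u2-w2)^2=D^2" "(v1-w1)^2+(v2-w2)^2 \<le> D^2" "D>0"
  shows "v1=w1 \<and> v2=w2"
proof (rule ccontr)
  assume ne: "\<not> (v1=w1 \<and> v2=w2)"
  define z1 where "z1 = v1-w1"
  define z2 where "z2=v2-w2"
  define s1 where "s1=v1+w1"
  define s2 where "s2=v2+w2"
  have uz: "u1*z1+u2*z2 = 0" using assms unfolding z1_def z2_def by (simp add: power2_eq_square algebra_simps)
  have sz: "s1*z1+s2*z2 = 0" using assms unfolding z1_def z2_def s1_def s2_def by (simp add: power2_eq_square algebra_simps)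
  have us: "u1*s1+u2*s2 = D^2" using assms unfolding s1_def s2_def by (simp add: power2_eq_square algebra_simps)
  have zn: "z1^2+z2^2 > 0" using ne unfolding z1_def z2_def
    by (metis add_le_same_cancel1 eq_iff_diff_eq_0 not_le power2_less_eq_zero_iff sum_power2_gt_zero_iff zero_less_power2)
  have cr: "u1*s2 - u2*s1 = 0"
  proof -
    have a: "u1*z1 = -(u2*z2)" "s1*z1 = -(s2*z2)" using uz sz by linarith+
    have "(u1*s2 - u2*s1)*z1 = s2*(u1*z1) - u2*(s1*z1)" by (simp add: algebra_simps)
    also have "... = 0" using a by (simp add: algebra_simps)
    finally have e1: "(u1*s2 - u2*s1)*z1 = 0" .
    have b: "u2*z2 = -(u1*z1)" "s2*z2 = -(s1*z1)" using uz sz by linarith+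
    have "(u1*s2 - u2*s1)*z2 = u1*(s2*z2) - s1*(u2*z2)" by (simp add: algebra_simps)
    also have "... = 0" using b by (simp add: algebra_simps)
    finally have e2: "(u1*s2 - u2*s1)*z2 = 0" .
    show ?thesis
    proof (rule ccontr)
      assume "u1*s2 - u2*s1 \<noteq> 0"
      then have "z1 = 0" "z2 = 0" using e1 e2 by simp_all
      then show False using zn by simp
    qed
  qed
  have ident: "(u1*s1+u2*s2)^2 + (u1*s2 - u2*s1)^2 = (u1^2+u2^2)*(s1^2+s2^2)" by (simp add: power2_eq_square algebra_simps)
  have ss: "s1^2+s2^2 + (z1^2+z2^2) = 4*D^2" using assms unfolding z1_def z2_def s1_def s2_def by (simp add: power2_eq_square algebra_simps)
  have "D^4 = D^2*(s1^2+s2^2)" using ident us cr assms(1) by (simp add: power2_eq_square power4_eq_xxxx) 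
  hence "s1^2+s2^2 = D^2" using assms(7) by (simp add: power2_eq_square power4_eq_xxxx)
  hence "z1^2+z2^2 = 3*D^2" using ss by simp
  moreover have "z1^2+z2^2 \<le> D^2" using assms(6) unfolding z1_def z2_def .
  ultimately show False using assms(7) by simp
qed

lemma geo':
  fixes a1 a2 b1 b2 c1 c2 d1 d2 D :: real
  assumes "(b1-a1)^2+(b2-a2)^2=D^2" "(c1-a1)^2+(c2-a2)^2=D^2" "(d1-a1)^2+(d2-a2)^2=D^2"
   "(b1-c1)^2+(b2-c2)^2=D^2" "(b1-d1)^2+(b2-d2)^2=D^2" "(c1-d1)^2+(c2-d2)^2 \<le> D^2" "D>0"
  shows "c1=d1 \<and> c2=d2"
proof -
  have "c1-a1=d1-a1 \<and> c2-a2=d2-a2"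
    by (rule geo[of "b1-a1" "b2-a2" D]) (use assms in \<open>simp_all\<close>)
  then show ?thesis by simp
qed

lemma edist2: "edist 2 x y = sqrt ((x 0 - y 0)^2 + (x 1 - y 1)^2)"
  by (simp add: edist_def numeral_2_eq_2)

lemma edist_sym: "edist d x y = edist d y x"
  unfolding edist_def by (simp add: power2_commute)

lemma edist_nonneg: "edist d x y \<ge> 0"
  unfolding edist_def by (simp add: sum_nonneg)

lemma edist2_sq: "(edist 2 x y)^2 = (x 0 - y 0)^2 + (x 1 - y 1)^2"
  unfolding edist2 by simp

lemma no_big:
  assumes EA: "E \<subseteq> all_edges n"
    and A: "\<forall>a b c. a<n \<longrightarrow> b<n \<longrightarrow> c<n \<longrightarrow> a\<noteq>b \<longrightarrow> a\<noteq>c \<longrightarrow> b\<noteq>c \<longrightarrow> {a,b}\<in>E \<or> {a,c}\<in>E"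
    and Wn: "W \<subseteq> {..<n}" and c4: "card W \<ge> 4"
    and dg: "is_diameter_graph 2 W (induced_edges E W)"
  shows "chromatic_number W (induced_edges E W) \<le> 2"
proof -
  have finW: "finite W" using Wn finite_subset by auto
  obtain f :: "nat \<Rightarrow> nat \<Rightarrow> real" where pos: "\<forall>x\<in>W. \<forall>y\<in>W. x \<noteq> y \<longrightarrow> edist 2 (f x) (f y) > 0"
    and ed: "\<forall>e. e \<in> induced_edges E W \<longleftrightarrow> (\<exists>x\<in>W. \<exists>y\<in>W. x \<noteq> y \<and> e = {x, y} \<and>
        edist 2 (f x) (f y) = Max {edist 2 (f x) (f y) | x y. x \<in> W \<and> y \<in> W})"
    using dg unfolding is_diameter_graph_def Let_def by blast
  define D where "D = Max {edist 2 (f x) (f y) | x y. x \<in> W \<and> y \<in> W}"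
  have finS: "finite {edist 2 (f x) (f y) | x y. x \<in> W \<and> y \<in> W}"
  proof -
    have "{edist 2 (f x) (f y) | x y. x \<in> W \<and> y \<in> W} = (\<lambda>(x,y). edist 2 (f x) (f y)) ` (W \<times> W)" by auto
    then show ?thesis using finW by simp
  qed
  have leD: "edist 2 (f x) (f y) \<le> D" if "x \<in> W" "y \<in> W" for x y
    unfolding D_def by (rule Max_ge[OF finS]) (use that in auto)
  define R where "R = (\<lambda>x y. x \<noteq> y \<and> edist 2 (f x) (f y) = D)"
  have symR: "R y x" if "R x y" for x y using that unfolding R_def by (simp add: edist_sym)
  have bridge: "{x,y} \<in> induced_edges E W \<longleftrightarrow> R x y" if "x \<in> W" "y \<in> W" "x \<noteq> y" for x y
  proof
    assume "{x,y} \<in> induced_edges E W"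
    then obtain x' y' where "x'\<in>W" "y'\<in>W" "x'\<noteq>y'" "{x,y} = {x',y'}" "edist 2 (f x') (f y') = D"
      using ed unfolding D_def by blast
    then show "R x y" unfolding R_def using that
      by (metis doubleton_eq_iff edist_sym)
  next
    assume "R x y" then show "{x,y} \<in> induced_edges E W" using ed that unfolding R_def D_def by blast
  qed
  have bridgeE: "{x,y} \<in> induced_edges E W \<longleftrightarrow> {x,y} \<in> E" if "x \<in> W" "y \<in> W" for x y
    using that unfolding induced_edges_def by auto
  have AR: "R x y \<or> R x z" if "x\<in>W" "y\<in>W" "z\<in>W" "x\<noteq>y" "x\<noteq>z" "y\<noteq>z" for x y z
  proof -
    have "{x,y}\<in>E \<or> {x,z}\<in>E" using A that Wn by blast
    then show ?thesis using bridge bridgeE that by blast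
  qed
  have GR: False if "a\<in>W" "b\<in>W" "c\<in>W" "d\<in>W" "a\<noteq>b" "a\<noteq>c" "a\<noteq>d" "b\<noteq>c" "b\<noteq>d" "c\<noteq>d"
      "R a b" "R a c" "R b c" "R a d" "R b d" for a b c d
  proof -
    have Dp: "D > 0" using that pos unfolding R_def by auto
    have eq: "(edist 2 (f x) (f y))^2 = D^2" if "R x y" for x y using that unfolding R_def by simp
    have "(edist 2 (f c) (f d))^2 \<le> D^2" using leD[of c d] that edist_nonneg
      by (simp add: power_mono)
    then have "f c 0 = f d 0 \<and> f c 1 = f d 1"
      using geo'[of "f b 0" "f a 0" "f b 1" "f a 1" D "f c 0" "f c 1" "f d 0" "f d 1"]
        eq[of b a] eq[of c a] eq[of d a] eq[of b c] eq[of b d] symR that Dp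
      unfolding edist2_sq by blast
    then have "edist 2 (f c) (f d) = 0" unfolding edist2 by simp
    then show False using pos that by fastforce
  qed
  have "\<exists>c::nat\<Rightarrow>nat. (\<forall>x\<in>W. c x < 2) \<and> (\<forall>x\<in>W. \<forall>y\<in>W. x\<noteq>y \<longrightarrow> c x = c y \<longrightarrow> \<not> R x y)"
    apply (rule comb[of W R])
        apply (fact finW)
       apply (fact c4)
      apply (fact symR)
     apply (fact AR)
    apply (fact GR)
    done
  then obtain col :: "nat \<Rightarrow> nat" where col: "\<forall>x\<in>W. col x < 2" "\<forall>x\<in>W. \<forall>y\<in>W. x\<noteq>y \<longrightarrow> col x = col y \<longrightarrow> \<not> R x y"
    by blast
  have "\<exists>c :: nat \<Rightarrow> nat. (\<forall>x\<in>W. c x < 2) \<and>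
                 (\<forall>x\<in>W. \<forall>y\<in>W. x \<noteq> y \<longrightarrow> {x, y} \<in> induced_edges E W \<longrightarrow> c x \<noteq> c y)"
    using col bridge by metis
  then show ?thesis unfolding chromatic_number_def by (rule Least_le)
qed


lemma tri:
  assumes n3: "n \<ge> 3" and EA: "E \<subseteq> all_edges n" and e: "{0,1} \<in> E" "{0,2} \<in> E" "{1,2} \<in> E"
  shows "\<exists>W. W \<subseteq> {..<n} \<and> card W = 3 \<and> is_diameter_graph 2 W (induced_edges E W) \<and>
     chromatic_number W (induced_edges E W) = 3 \<and> graph_connected W (induced_edges E W)"
proof -
  define W :: "nat set" where "W = {0,1,2}"
  have IE: "induced_edges E W = {{0,1},{0,2},{1,2}}"
  proof
    show "induced_edges E W \<subseteq> {{0,1},{0,2},{1,2}}"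
    proof
      fix x assume x: "x \<in> induced_edges E W"
      then have "x \<in> all_edges n" "x \<subseteq> W" using EA unfolding induced_edges_def by auto
      then obtain i j where "x = {i,j}" "i < j" "i \<in> W" "j \<in> W" unfolding all_edges_def by auto
      then show "x \<in> {{0,1},{0,2},{1,2}}" unfolding W_def by auto
    qed
  next
    show "{{0,1},{0,2},{1,2}} \<subseteq> induced_edges E W" using e unfolding induced_edges_def W_def by auto
  qed
  define f :: "nat \<Rightarrow> nat \<Rightarrow> real" where "f v = (if v = 0 then (\<lambda>i. 0) else if v = 1 then (\<lambda>i. if i = 0 then 1 else 0)
     else (\<lambda>i. if i = 0 then 1/2 else if i = 1 then sqrt 3 / 2 else 0))" for v
  have d01: "edist 2 (f 0) (f 1) = 1" unfolding edist2 f_def by simp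
  have d02: "edist 2 (f 0) (f 2) = 1" unfolding edist2 f_def by (simp add: power_divide)
  have d12: "edist 2 (f 1) (f 2) = 1" unfolding edist2 f_def by (simp add: power_divide)
  have d1: "edist 2 (f x) (f y) = 1" if "x \<in> W" "y \<in> W" "x \<noteq> y" for x y
    using that d01 d02 d12 edist_sym unfolding W_def by auto
  have d0: "edist 2 (f x) (f x) = 0" for x unfolding edist_def by simp
  have S: "{edist 2 (f x) (f y) | x y. x \<in> W \<and> y \<in> W} = {0,1}"
  proof
    show "{edist 2 (f x) (f y) | x y. x \<in> W \<and> y \<in> W} \<subseteq> {0,1}" using d0 d1 by force
    show "{0,1} \<subseteq> {edist 2 (f x) (f y) | x y. x \<in> W \<and> y \<in> W}"
      using d0[of 0] d01 unfolding W_def by force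
  qed
  have dg: "is_diameter_graph 2 W (induced_edges E W)"
    unfolding is_diameter_graph_def Let_def
  proof (rule exI[of _ f], intro conjI allI)
    show "\<forall>x\<in>W. \<forall>y\<in>W. x \<noteq> y \<longrightarrow> 0 < edist 2 (f x) (f y)" using d1 by simp
    fix e
    show "(e \<in> induced_edges E W) = (\<exists>x\<in>W. \<exists>y\<in>W. x \<noteq> y \<and> e = {x, y} \<and>
         edist 2 (f x) (f y) = Max {edist 2 (f x) (f y) |x y. x \<in> W \<and> y \<in> W})"
      unfolding S IE using d1 unfolding W_def by auto
  qed
  have chi: "chromatic_number W (induced_edges E W) = 3"
    unfolding chromatic_number_def
  proof (rule Least_equality)
    show "\<exists>c::nat\<Rightarrow>nat. (\<forall>x\<in>W. c x < 3) \<and> (\<forall>x\<in>W. \<forall>y\<in>W. x \<noteq> y \<longrightarrow> {x, y} \<in> induced_edges E W \<longrightarrow> c x \<noteq> c y)"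
      by (rule exI[of _ id]) (auto simp: W_def)
  next
    fix k assume "\<exists>c::nat\<Rightarrow>nat. (\<forall>x\<in>W. c x < k) \<and> (\<forall>x\<in>W. \<forall>y\<in>W. x \<noteq> y \<longrightarrow> {x, y} \<in> induced_edges E W \<longrightarrow> c x \<noteq> c y)"
    then obtain c :: "nat\<Rightarrow>nat" where c: "\<forall>x\<in>W. c x < k" "\<forall>x\<in>W. \<forall>y\<in>W. x \<noteq> y \<longrightarrow> {x, y} \<in> induced_edges E W \<longrightarrow> c x \<noteq> c y"
      by blast
    have c2: "\<forall>x\<in>W. \<forall>y\<in>W. x \<noteq> y \<longrightarrow> {x, y} \<in> {{0,1},{0,2},{1,2}} \<longrightarrow> c x \<noteq> c y" using c(2) IE by simp
    have "c 0 < k" "c 1 < k" "c 2 < k" using c(1) unfolding W_def by auto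
    moreover have "c 0 \<noteq> c 1" "c 0 \<noteq> c 2" "c 1 \<noteq> c 2" using c2 unfolding W_def by auto
    ultimately show "3 \<le> k" by linarith
  qed
  have conn: "graph_connected W (induced_edges E W)"
    unfolding graph_connected_def
  proof (intro ballI)
    fix x y assume xy: "x \<in> W" "y \<in> W"
    show "(\<lambda>a b. a \<in> W \<and> b \<in> W \<and> a \<noteq> b \<and> {a, b} \<in> induced_edges E W)\<^sup>*\<^sup>* x y"
    proof (cases "x = y")
      case True then show ?thesis by simp
    next
      case False
      have "{x,y} \<in> {{0,1},{0,2},{1,2}}" using xy False unfolding W_def by auto
      then have "{x,y} \<in> induced_edges E W" using IE by simp
      then show ?thesis using xy False by (simp add: r_into_rtranclp)
    qed
  qed
  have "W \<subseteq> {..<n}" "card W = 3" using n3 unfolding W_def by auto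
  then show ?thesis using dg chi conn by blast
qed


lemma bounds:
  assumes n3: "n \<ge> 3" and q: "1 - p \<le> 1/10 * (1 / real n powr (3/2))"
  shows "1 - p \<le> 1/10" "real n ^ 3 * (1-p)^2 \<le> 1/100 \<or> 1 - p < 0"
proof -
  have n1: "real n \<ge> 1" using n3 by simp
  have P: "real n powr (3/2) \<ge> 1" using n1 by (simp add: ge_one_powr_ge_zero)
  then have "1 / real n powr (3/2) \<le> 1" by (auto simp: divide_le_eq)
  then show "1 - p \<le> 1/10" using q by linarith
  have sq: "(real n powr (3/2))^2 = real n ^ 3"
  proof -
    have "(real n powr (3/2))^2 = real n powr (3/2) * real n powr (3/2)" by (simp add: power2_eq_square)
    also have "... = real n powr 3" by (simp add: powr_add[symmetric])
    also have "... = real n ^ 3" using n1 by (simp add: powr_realpow)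
    finally show ?thesis .
  qed
  show "real n ^ 3 * (1-p)^2 \<le> 1/100 \<or> 1 - p < 0"
  proof (cases "1 - p < 0")
    case False
    then have "(1-p)^2 \<le> (1/10 * (1 / real n powr (3/2)))^2" using q by (simp add: power_mono)
    also have "... = 1/100 / real n ^ 3" using sq by (simp add: power_divide power_mult_distrib)
    finally have "(1-p)^2 \<le> 1/100 / real n ^ 3" .
    then have "(1-p)^2 * real n ^ 3 \<le> 1/100" using n1 by (subst (asm) pos_le_divide_eq) auto
    then show ?thesis by (simp add: mult.commute)
  qed simp
qed

lemma good3:
  assumes n3: "n \<ge> 3" and p: "0 \<le> p" "p \<le> 1" and q: "1 - p \<le> 1/10"
  shows "u_good c 2 n p 3"
proof -
  define F :: "nat set set" where "F = {{0,1},{0,2},{1,2}}"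
  have FS: "F \<subseteq> all_edges n" unfolding F_def using n3 by (auto intro!: edge_in)
  have cF: "card F = 3" unfolding F_def by (simp add: doubleton_eq_iff)
  have "prob_Gnp n p (\<lambda>E. \<not> F \<subseteq> E) \<le> (\<Sum>e\<in>F. prob_Gnp n p (\<lambda>E. {e} \<inter> E = {}))"
    by (rule prob_union) (use p in \<open>auto simp: F_def\<close>)
  also have "... = (\<Sum>e\<in>F. (1-p))"
  proof (rule sum.cong[OF refl])
    fix e assume e: "e \<in> F"
    have "prob_Gnp n p (\<lambda>E. {e} \<inter> E = {}) = (1-p)^card {e}" by (rule prob_avoid) (use FS e in auto)
    then show "prob_Gnp n p (\<lambda>E. {e} \<inter> E = {}) = 1 - p" by simp
  qed
  also have "... = 3 * (1-p)" using cF by simp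
  finally have nq: "prob_Gnp n p (\<lambda>E. \<not> F \<subseteq> E) \<le> 3 * (1-p)" .
have Qc: "prob_Gnp n p (\<lambda>E. F \<subseteq> E) = 1 - prob_Gnp n p (\<lambda>E. \<not> F \<subseteq> E)"
    using prob_compl[of n p "\<lambda>E. F \<subseteq> E"] by simp
  have q3: "3*(1-p) \<le> 3/10" using q by simp
  have q4: "prob_Gnp n p (\<lambda>E. \<not> F \<subseteq> E) \<le> 3/10" using nq q3 by (rule order.trans)
  have Q7: "prob_Gnp n p (\<lambda>E. F \<subseteq> E) \<ge> 7/10" unfolding Qc using q4 by simp
  have mono: "prob_Gnp n p (\<lambda>E. F \<subseteq> E) \<le> prob_Gnp n p (\<lambda>E. \<exists>W. W \<subseteq> {..<n} \<and> card W = 3 \<and>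
        is_diameter_graph 2 W (induced_edges E W) \<and>
        chromatic_number W (induced_edges E W) = 2 + 1 \<and>
        (c \<longrightarrow> graph_connected W (induced_edges E W)))"
  proof (rule prob_mono[OF p])
    fix E assume "E \<subseteq> all_edges n" "F \<subseteq> E"
    then show "\<exists>W. W \<subseteq> {..<n} \<and> card W = 3 \<and>
        is_diameter_graph 2 W (induced_edges E W) \<and>
        chromatic_number W (induced_edges E W) = 2 + 1 \<and>
        (c \<longrightarrow> graph_connected W (induced_edges E W))"
      using tri[of n E] n3 unfolding F_def by auto
  qed
  have "prob_Gnp n p (\<lambda>E. \<exists>W. W \<subseteq> {..<n} \<and> card W = 3 \<and>
        is_diameter_graph 2 W (induced_edges E W) \<and>
        chromatic_number W (induced_edges E W) = 2 + 1 \<and>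
        (c \<longrightarrow> graph_connected W (induced_edges E W))) > 1/2" using Q7 mono by linarith
  then show ?thesis unfolding u_good_def by simp
qed

lemma bad:
  assumes n3: "n \<ge> 3" and p: "0 \<le> p" "p \<le> 1" and q: "real n ^ 3 * (1-p)^2 \<le> 1/100" and k: "k \<ge> 4"
  shows "\<not> u_good c 2 n p k"
proof -
  define T where "T = {(a,b,c). a<n \<and> b<n \<and> c<n \<and> a\<noteq>b \<and> a\<noteq>c \<and> b\<noteq>(c::nat)}"
  define G where "G = (\<lambda>(a,b,c). {{a,b},{a,c::nat}})"
  have TS: "T \<subseteq> {..<n} \<times> {..<n} \<times> {..<n}" unfolding T_def by auto
  have finT: "finite T" using TS finite_subset by blast
  have cT: "card T \<le> n^3"
  proof -
    have "card T \<le> card ({..<n} \<times> {..<n} \<times> {..<n})" by (rule card_mono) (use TS in auto)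
    then show ?thesis by (simp add: card_cartesian_product power3_eq_cube)
  qed
  have Gt: "G t \<subseteq> all_edges n \<and> card (G t) = 2" if "t \<in> T" for t
    using that unfolding T_def G_def by (auto intro!: edge_in simp: doubleton_eq_iff)
  let ?ev = "\<lambda>E. \<exists>W. W \<subseteq> {..<n} \<and> card W = k \<and>
        is_diameter_graph 2 W (induced_edges E W) \<and>
        chromatic_number W (induced_edges E W) = 2 + 1 \<and>
        (c \<longrightarrow> graph_connected W (induced_edges E W))"
  have "prob_Gnp n p ?ev \<le> (\<Sum>t\<in>T. prob_Gnp n p (\<lambda>E. G t \<inter> E = {}))"
  proof (rule prob_union[OF p finT])
    fix E assume EA: "E \<subseteq> all_edges n" and ev: "?ev E"
    show "\<exists>t\<in>T. G t \<inter> E = {}"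
    proof (rule ccontr)
      assume "\<not> (\<exists>t\<in>T. G t \<inter> E = {})"
      then have A: "\<forall>a b c. a<n \<longrightarrow> b<n \<longrightarrow> c<n \<longrightarrow> a\<noteq>b \<longrightarrow> a\<noteq>c \<longrightarrow> b\<noteq>c \<longrightarrow> {a,b}\<in>E \<or> {a,c}\<in>E"
        unfolding T_def G_def by fastforce
      obtain W where W: "W \<subseteq> {..<n}" "card W = k" "is_diameter_graph 2 W (induced_edges E W)"
        "chromatic_number W (induced_edges E W) = 3" using ev by auto
      have "chromatic_number W (induced_edges E W) \<le> 2"
        by (rule no_big[OF EA A W(1) _ W(3)]) (use W k in simp)
      then show False using W(4) by simp
    qed
  qed
  also have "... = (\<Sum>t\<in>T. (1-p)^2)"
    by (rule sum.cong[OF refl]) (use Gt prob_avoid in metis)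
  also have "... = real (card T) * (1-p)^2" by simp
  also have "... \<le> real n ^ 3 * (1-p)^2" using cT by (simp add: mult_right_mono)
  finally show ?thesis unfolding u_good_def using q by linarith
qed

lemma key_n:
  assumes n3: "n \<ge> 3" and p: "0 \<le> p" "p \<le> 1" and q: "1 - p \<le> 1/10 * (1 / real n powr (3/2))"
  shows "u 2 n p = 3 \<and> u' 2 n p = 3"
proof -
  have q1: "1 - p \<le> 1/10" and q2: "real n ^ 3 * (1-p)^2 \<le> 1/100" using bounds[OF n3 q] p by auto
  have g: "u_good c 2 n p 3" for c using good3[OF n3 p q1] .
  have b: "\<not> u_good c 2 n p k" if "k \<ge> 4" for c k using bad[OF n3 p q2 that] .
  have gr: "(GREATEST k. k > 0 \<and> u_good c 2 n p k) = 3" for c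
  proof (rule Greatest_equality)
    show "0 < (3::nat) \<and> u_good c 2 n p 3" using g by simp
    fix y assume "0 < y \<and> u_good c 2 n p y"
    then show "y \<le> 3" using b[of y c] by (cases "y \<ge> 4") auto
  qed
  have ex: "\<exists>k>0. u_good c 2 n p k" for c using g by (intro exI[of _ 3]) simp
  show ?thesis unfolding u_def u'_def using gr ex by simp
qed

theorem theorem14:
  fixes p :: "nat \<Rightarrow> real"
  assumes "\<forall>n. 0 \<le> p n \<and> p n \<le> 1"
    and "(\<lambda>n. 1 - p n) \<in> o(\<lambda>n. 1 / real n powr (3/2))"
  shows "\<forall>\<^sub>F n in sequentially. u 2 n (p n) = 3 \<and> u' 2 n (p n) = 3"
proof -
  have ev: "\<forall>\<^sub>F n in sequentially. norm (1 - p n) \<le> 1/10 * norm (1 / real n powr (3/2))"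
    by (rule landau_o.smallD[OF assms(2)]) simp
  have ev3: "\<forall>\<^sub>F n in sequentially. n \<ge> 3" by (rule eventually_ge_at_top)
  show ?thesis
  proof (rule eventually_mono[OF eventually_conj[OF ev ev3]])
    fix n assume h: "norm (1 - p n) \<le> 1/10 * norm (1 / real n powr (3/2)) \<and> n \<ge> 3"
    have pos: "1 / real n powr (3/2) > 0" using h by simp
    have "1 - p n \<le> 1/10 * (1 / real n powr (3/2))" using h pos by auto
    then show "u 2 n (p n) = 3 \<and> u' 2 n (p n) = 3" using key_n[of n "p n"] h assms(1) by blast
  qed
qed

end
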